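(* Under the standing assumptions below, suppose there exists $m\in M$ such that $\phi\left(\left[\begin{smallmatrix} 1 & m\\ 0 & 0\end{smallmatrix}\right]\right)$ is a type 1 idempotent of $T'$. Then (a) $\phi$ maps every idempotent of the form $\left[\begin{smallmatrix} 1 & m\\ 0 & 0\end{smallmatrix}\right]$ ($m\in M$) to a type 1 idempotent; and (b) there exist a fixed element $b'_1\in N'$ and a map $u_1:M\to M'$ such that $\phi\left(\left[\begin{smallmatrix} 1 & m\\ 0 & 0\end{smallmatrix}\right]\right)=\left[\begin{smallmatrix} 1 & u_1(m)\\ b'_1 & 0\end{smallmatrix}\right]$ for all $m\in M$.
   Context: All rings have an identity $1\neq 0$. Standing assumptions: $R,S,R',S'$ are rings whose only idempotents are $0$ and $1$; $M$ is an $R$-$S$-bimodule, $N$ an $S$-$R$-bimodule, $M'$ an $R'$-$S'$-bimodule, $N'$ an $S'$-$R'$-bimodule; $T=\left[\begin{smallmatrix} R & M\\ N & S\end{smallmatrix}\right]$ and $T'=\left[\begin{smallmatrix} R' & M'\\ N' & S'\end{smallmatrix}\right]$ are the Morita context rings with both Morita maps zero, i.e. the sets of formal matrices with entrywise addition and product $\left[\begin{smallmatrix} r & m\\ n & s\end{smallmatrix}\right]\left[\begin{smallmatrix} r' & m'\\ n' & s'\end{smallmatrix}\right]=\left[\begin{smallmatrix} rr' & rm'+ms'\\ nr'+sn' & ss'\end{smallmatrix}\right]$; and $\phi:T\to T'$ is a ring isomorphism. Under these assumptions every idempotent of $T$ (or $T'$) other than $0$ and $1$ has one of the forms $\left[\begin{smallmatrix}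 1 & m\\ n & 0\end{smallmatrix}\right]$ (called a type 1 idempotent) or $\left[\begin{smallmatrix} 0 & m\\ n & 1\end{smallmatrix}\right]$ (called a type 2 idempotent). *)

theory Defs
  imports Main
begin

definition only_trivial_idempotents :: "'r::ring_1 itself \<Rightarrow> bool" where
  "only_trivial_idempotents _ \<longleftrightarrow> (\<forall>x::'r. x * x = x \<longrightarrow> x = 0 \<or> x = 1)"

definition bimodule ::
  "('r::ring_1 \<Rightarrow> 'm::ab_group_add \<Rightarrow> 'm) \<Rightarrow> ('m \<Rightarrow> 's::ring_1 \<Rightarrow> 'm) \<Rightarrow> bool" where
  "bimodule la ra \<longleftrightarrow>
     (\<forall>r m m'. la r (m + m') = la r m + la r m') \<and>
     (\<forall>r r' m. la (r + r') m = la r m + la r' m) \<and>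
     (\<forall>r r' m. la (r * r') m = la r (la r' m)) \<and>
     (\<forall>m. la 1 m = m) \<and>
     (\<forall>s m m'. ra (m + m') s = ra m s + ra m' s) \<and>
     (\<forall>s s' m. ra m (s + s') = ra m s + ra m s') \<and>
     (\<forall>s s' m. ra m (s * s') = ra (ra m s) s') \<and>
     (\<forall>m. ra m 1 = m) \<and>
     (\<forall>r m s. ra (la r m) s = la r (ra m s))"

text \<open>Formal 2x2 matrices [[r, m],[n, s]].\<close>
datatype ('r, 'm, 'n, 's) mc = MC 'r 'm 'n 's

text \<open>Operations of the Morita context ring with both Morita maps zero.
  lm, rm: left/right actions on M; ln, rn: left/right actions on N.\<close>
fun mc_add :: "('r::ring_1, 'm::ab_group_add, 'n::ab_group_add, 's::ring_1) mc \<Rightarrow> ('r, 'm, 'n, 's) mc \<Rightarrow> ('r, 'm, 'n, 's) mc" where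
  "mc_add (MC r m n s) (MC r' m' n' s') = MC (r + r') (m + m') (n + n') (s + s')"

fun mc_mult ::
  "('r::ring_1 \<Rightarrow> 'm::ab_group_add \<Rightarrow> 'm) \<Rightarrow> ('m \<Rightarrow> 's::ring_1 \<Rightarrow> 'm) \<Rightarrow>
   ('s \<Rightarrow> 'n::ab_group_add \<Rightarrow> 'n) \<Rightarrow> ('n \<Rightarrow> 'r \<Rightarrow> 'n) \<Rightarrow>
   ('r, 'm, 'n, 's) mc \<Rightarrow> ('r, 'm, 'n, 's) mc \<Rightarrow> ('r, 'm, 'n, 's) mc" where
  "mc_mult lm rm ln rn (MC r m n s) (MC r' m' n' s') =
     MC (r * r') (lm r m' + rm m s') (rn n r' + ln s n') (s * s')"

definition mc_one :: "('r::ring_1, 'm::ab_group_add, 'n::ab_group_add, 's::ring_1) mc" where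
  "mc_one = MC 1 0 0 1"

definition mc_ring_iso ::
  "('r::ring_1 \<Rightarrow> 'm::ab_group_add \<Rightarrow> 'm) \<Rightarrow> ('m \<Rightarrow> 's::ring_1 \<Rightarrow> 'm) \<Rightarrow>
   ('s \<Rightarrow> 'n::ab_group_add \<Rightarrow> 'n) \<Rightarrow> ('n \<Rightarrow> 'r \<Rightarrow> 'n) \<Rightarrow>
   ('r2::ring_1 \<Rightarrow> 'm2::ab_group_add \<Rightarrow> 'm2) \<Rightarrow> ('m2 \<Rightarrow> 's2::ring_1 \<Rightarrow> 'm2) \<Rightarrow>
   ('s2 \<Rightarrow> 'n2::ab_group_add \<Rightarrow> 'n2) \<Rightarrow> ('n2 \<Rightarrow> 'r2 \<Rightarrow> 'n2) \<Rightarrow>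
   (('r, 'm, 'n, 's) mc \<Rightarrow> ('r2, 'm2, 'n2, 's2) mc) \<Rightarrow> bool" where
  "mc_ring_iso lm rm ln rn lm' rm' ln' rn' \<phi> \<longleftrightarrow>
     bij \<phi> \<and>
     (\<forall>x y. \<phi> (mc_add x y) = mc_add (\<phi> x) (\<phi> y)) \<and>
     (\<forall>x y. \<phi> (mc_mult lm rm ln rn x y) = mc_mult lm' rm' ln' rn' (\<phi> x) (\<phi> y)) \<and>
     \<phi> mc_one = mc_one"

definition mc_idempotent ::
  "('r::ring_1 \<Rightarrow> 'm::ab_group_add \<Rightarrow> 'm) \<Rightarrow> ('m \<Rightarrow> 's::ring_1 \<Rightarrow> 'm) \<Rightarrow>
   ('s \<Rightarrow> 'n::ab_group_add \<Rightarrow> 'n) \<Rightarrow> ('n \<Rightarrow> 'r \<Rightarrow> 'n) \<Rightarrow> ('r, 'm, 'n, 's) mc \<Rightarrow> bool" where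
  "mc_idempotent lm rm ln rn e \<longleftrightarrow> mc_mult lm rm ln rn e e = e"

definition type1_idempotent ::
  "('r::ring_1 \<Rightarrow> 'm::ab_group_add \<Rightarrow> 'm) \<Rightarrow> ('m \<Rightarrow> 's::ring_1 \<Rightarrow> 'm) \<Rightarrow>
   ('s \<Rightarrow> 'n::ab_group_add \<Rightarrow> 'n) \<Rightarrow> ('n \<Rightarrow> 'r \<Rightarrow> 'n) \<Rightarrow> ('r, 'm, 'n, 's) mc \<Rightarrow> bool" where
  "type1_idempotent lm rm ln rn e \<longleftrightarrow>
     mc_idempotent lm rm ln rn e \<and> (\<exists>m n. e = MC 1 m n 0)"

end

theory Submission
  imports Defs
begin

lemma bim_facts:
  fixes la :: "'r::ring_1 \<Rightarrow> 'm::ab_group_add \<Rightarrow> 'm" and ra :: "'m \<Rightarrow> 's::ring_1 \<Rightarrow> 'm"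
  assumes "bimodule la ra"
  shows "la 1 m = m" "ra m 1 = m" "la 0 m = 0" "ra m 0 = 0" "la r 0 = 0" "ra 0 s = 0"
proof -
  show "la 1 m = m" "ra m 1 = m" using assms unfolding bimodule_def by auto
  have "la (0+0) m = la 0 m + la 0 m" using assms unfolding bimodule_def by (elim conjE) blast
  thus "la 0 m = 0" by simp
  have "ra m (0+0) = ra m 0 + ra m 0" using assms unfolding bimodule_def by (elim conjE) blast
  thus "ra m 0 = 0" by simp
  have h: "\<forall>r m m'. la r (m + m') = la r m + la r m'" using assms unfolding bimodule_def by (elim conjE) blast
  have "la r (0+0) = la r 0 + la r 0" using h by metis
  thus "la r 0 = 0" by simp
  have h2: "\<forall>s m m'. ra (m + m') s = ra m s + ra m' s" using assms unfolding bimodule_def by (elim conjE) blast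
  have "ra (0+0) s = ra 0 s + ra 0 s" using h2 by metis
  thus "ra 0 s = 0" by simp
qed

theorem corollary4p2:
  fixes lm :: "'r::ring_1 \<Rightarrow> 'm::ab_group_add \<Rightarrow> 'm" and rm :: "'m \<Rightarrow> 's::ring_1 \<Rightarrow> 'm"
    and ln :: "'s \<Rightarrow> 'n::ab_group_add \<Rightarrow> 'n" and rn :: "'n \<Rightarrow> 'r \<Rightarrow> 'n"
    and lm' :: "'r2::ring_1 \<Rightarrow> 'm2::ab_group_add \<Rightarrow> 'm2" and rm' :: "'m2 \<Rightarrow> 's2::ring_1 \<Rightarrow> 'm2"
    and ln' :: "'s2 \<Rightarrow> 'n2::ab_group_add \<Rightarrow> 'n2" and rn' :: "'n2 \<Rightarrow> 'r2 \<Rightarrow> 'n2"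
    and \<phi> :: "('r, 'm, 'n, 's) mc \<Rightarrow> ('r2, 'm2, 'n2, 's2) mc"
  assumes "only_trivial_idempotents TYPE('r)" and "only_trivial_idempotents TYPE('s)"
    and "only_trivial_idempotents TYPE('r2)" and "only_trivial_idempotents TYPE('s2)"
    and "bimodule lm rm" and "bimodule ln rn" and "bimodule lm' rm'" and "bimodule ln' rn'"
    and "mc_ring_iso lm rm ln rn lm' rm' ln' rn' \<phi>"
    and "\<exists>m. type1_idempotent lm' rm' ln' rn' (\<phi> (MC 1 m 0 0))"
  shows "(\<forall>m. type1_idempotent lm' rm' ln' rn' (\<phi> (MC 1 m 0 0))) \<and>
         (\<exists>b1 :: 'n2. \<exists>u1 :: 'm \<Rightarrow> 'm2. \<forall>m. \<phi> (MC 1 m 0 0) = MC 1 (u1 m) b1 0)"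
proof -
  note b1 = bim_facts[OF assms(5)] and b2 = bim_facts[OF assms(6)]
   and b3 = bim_facts[OF assms(7)] and b4 = bim_facts[OF assms(8)]
  have inj: "inj \<phi>" using assms(9) unfolding mc_ring_iso_def bij_def by blast
  have add: "\<And>x y. \<phi> (mc_add x y) = mc_add (\<phi> x) (\<phi> y)" using assms(9) unfolding mc_ring_iso_def by blast
  have mul: "\<And>x y. \<phi> (mc_mult lm rm ln rn x y) = mc_mult lm' rm' ln' rn' (\<phi> x) (\<phi> y)"
    using assms(9) unfolding mc_ring_iso_def by blast
  have phi0: "\<phi> (MC 0 0 0 0) = MC 0 0 0 0"
  proof -
    obtain a b c d where e: "\<phi> (MC 0 0 0 0) = MC a b c d" by (cases "\<phi> (MC 0 0 0 0)") auto
    have "\<phi> (mc_add (MC 0 0 0 0) (MC 0 0 0 0)) = mc_add (\<phi> (MC 0 0 0 0)) (\<phi> (MC 0 0 0 0))" by (rule add)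
    hence "MC a b c d = MC (a+a) (b+b) (c+c) (d+d)" using e by simp
    thus ?thesis using e by simp
  qed
  have ee: "\<And>p q. mc_mult lm rm ln rn (MC 1 p 0 0) (MC 1 q 0 0) = MC 1 q 0 0"
    using b1 b2 by simp
  obtain m0 where t0: "type1_idempotent lm' rm' ln' rn' (\<phi> (MC 1 m0 0 0))" using assms(10) by blast
  then obtain x0 y0 where e0: "\<phi> (MC 1 m0 0 0) = MC 1 x0 y0 0" unfolding type1_idempotent_def by blast
  have gen: "\<exists>x y. \<phi> (MC 1 m 0 0) = MC 1 x y 0 \<and> type1_idempotent lm' rm' ln' rn' (\<phi> (MC 1 m 0 0))" for m
  proof -
    obtain a x y b where e: "\<phi> (MC 1 m 0 0) = MC a x y b" by (cases "\<phi> (MC 1 m 0 0)") auto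
    have "\<phi> (MC 1 m 0 0) = mc_mult lm' rm' ln' rn' (\<phi> (MC 1 m0 0 0)) (\<phi> (MC 1 m 0 0))"
      using mul[of "MC 1 m0 0 0" "MC 1 m 0 0"] ee by simp
    hence "b = 0" using e e0 by simp
    have idm: "\<phi> (MC 1 m 0 0) = mc_mult lm' rm' ln' rn' (\<phi> (MC 1 m 0 0)) (\<phi> (MC 1 m 0 0))"
      using mul[of "MC 1 m 0 0" "MC 1 m 0 0"] ee by simp
    hence "a * a = a" using e by simp
    hence "a = 0 \<or> a = 1" using assms(3) unfolding only_trivial_idempotents_def by blast
    moreover have "a \<noteq> 0"
    proof
      assume "a = 0"
      hence "MC a x y b = MC 0 (x + x) y 0" using idm e \<open>b = 0\<close> b3 b4 by simp
      hence "x = 0" using \<open>a = 0\<close> \<open>b=0\<close> by simp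
      have "MC a x y b = MC 0 x (y+y) 0" using idm e \<open>b = 0\<close> \<open>a=0\<close> b3 b4 by simp
      hence "y = 0" by simp
      hence "\<phi> (MC 1 m 0 0) = \<phi> (MC 0 0 0 0)" using e phi0 \<open>a=0\<close> \<open>b=0\<close> \<open>x=0\<close> by simp
      hence "MC 1 m 0 0 = (MC 0 0 0 0 :: ('r,'m,'n,'s) mc)" using inj by (simp add: inj_eq)
      thus False by simp
    qed
    ultimately have "a = 1" by blast
    thus ?thesis using e \<open>b=0\<close> idm unfolding type1_idempotent_def mc_idempotent_def by auto
  qed
  obtain xz yz where ez: "\<phi> (MC 1 0 0 0) = MC 1 xz yz 0" using gen by blast
  have "\<forall>m. \<phi> (MC 1 m 0 0) = MC 1 (case \<phi> (MC 1 m 0 0) of MC _ x _ _ \<Rightarrow> x) yz 0"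
  proof
    fix m
    obtain x y where e: "\<phi> (MC 1 m 0 0) = MC 1 x y 0" using gen by blast
    have "\<phi> (MC 1 0 0 0) = mc_mult lm' rm' ln' rn' (\<phi> (MC 1 m 0 0)) (\<phi> (MC 1 0 0 0))"
      using mul[of "MC 1 m 0 0" "MC 1 0 0 0"] ee by simp
    hence "y = yz" using e ez b3 b4 by simp
    thus "\<phi> (MC 1 m 0 0) = MC 1 (case \<phi> (MC 1 m 0 0) of MC _ x _ _ \<Rightarrow> x) yz 0" using e by simp
  qed
  moreover have "\<forall>m. type1_idempotent lm' rm' ln' rn' (\<phi> (MC 1 m 0 0))" using gen by blast
  ultimately show ?thesis by (intro conjI exI) 
qed

end
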